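(* For every $n$ and every $R$, there exists an unweighted directed graph $G$ with $\Theta(n)$ vertices and radius $R$ such that, for any $\epsilon>0$, every subgraph $H$ of $G$ on the same vertex set that is a $(2-\epsilon)$-eccentricity spanner of $G$ contains $\Omega(n^2/R^2)$ edges.
   Context: $d_G(u,v)$ is the directed shortest-path distance, $\mathrm{outecc}_G(x)=\max_y d_G(x,y)$, and $\mathrm{rad}(G)=\min_x\mathrm{outecc}_G(x)$. A subgraph $H=(V,E')$, $E'\subseteq E$, is a $t$-eccentricity spanner of $G$ if $\mathrm{outecc}_H(x)\le t\cdot\mathrm{outecc}_G(x)$ for every vertex $x$. *)

theory Defs
  imports Main "HOL-Library.Extended_Real"
begin

text \<open>The directed shortest-path distance is the least number
of edges of a walk from u to v (infinity if v is unreachable from u).\<close>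

definition dgdist :: "('a \<times> 'a) set \<Rightarrow> 'a \<Rightarrow> 'a \<Rightarrow> enat" where
  "dgdist E u v = (INF k \<in> {k. (u, v) \<in> E ^^ k}. enat k)"

definition outecc :: "'a set \<Rightarrow> ('a \<times> 'a) set \<Rightarrow> 'a \<Rightarrow> enat" where
  "outecc V E x = (SUP y \<in> V. dgdist E x y)"

definition rad :: "'a set \<Rightarrow> ('a \<times> 'a) set \<Rightarrow> enat" where
  "rad V E = (INF x \<in> V. outecc V E x)"

definition ecc_spanner :: "'a set \<Rightarrow> ('a \<times> 'a) set \<Rightarrow> ('a \<times> 'a) set \<Rightarrow> real \<Rightarrow> bool" where
  "ecc_spanner V E E' t \<longleftrightarrow> E' \<subseteq> E \<and>
     (\<forall>x \<in> V. ereal_of_enat (outecc V E' x) \<le> ereal t * ereal_of_enat (outecc V E x))"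

end

theory Submission
  imports Defs "HOL-Library.Countable"
begin

lemma pot_relpow:
  assumes "\<forall>(u,v)\<in>E. \<phi> v \<le> \<phi> u + (1::nat)" "(u,v)\<in>E^^k"
  shows "\<phi> v \<le> \<phi> u + k"
  using assms(2)
proof (induction k arbitrary: v)
  case 0 then show ?case by simp
next
  case (Suc k)
  then obtain y where "(u,y)\<in>E^^k" "(y,v)\<in>E" by (blast elim: relpow_Suc_E)
  with Suc.IH assms(1) show ?case by fastforce
qed

lemma dist_lower:
  assumes "\<forall>(u,v)\<in>E. \<phi> v \<le> \<phi> u + (1::nat)"
  shows "enat (\<phi> v - \<phi> u) \<le> dgdist E u v"
  unfolding dgdist_def
proof (rule INF_greatest)
  fix k assume "k \<in> {k. (u, v) \<in> E ^^ k}"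
  then have "\<phi> v \<le> \<phi> u + k" using pot_relpow[OF assms] by blast
  then show "enat (\<phi> v - \<phi> u) \<le> enat k" by simp
qed

lemma dist_upper: "(u,v)\<in>E^^k \<Longrightarrow> dgdist E u v \<le> enat k"
  unfolding dgdist_def by (rule INF_lower) simp

lemma img_relpow: "(u,v)\<in>E^^k \<Longrightarrow> (f u, f v) \<in> (map_prod f f ` E)^^k"
proof (induction k arbitrary: v)
  case 0 then show ?case by simp
next
  case (Suc k)
  then obtain y where "(u,y)\<in>E^^k" "(y,v)\<in>E" by (blast elim: relpow_Suc_E)
  with Suc.IH show ?case by (blast intro: relpow_Suc_I)
qed

lemma pot_img:
  assumes "inj f" "\<forall>(u,v)\<in>E. \<phi> v \<le> \<phi> u + (1::nat)" "E'' \<subseteq> map_prod f f ` E"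
  shows "\<forall>(u,v)\<in>E''. (\<phi> \<circ> inv f) v \<le> (\<phi> \<circ> inv f) u + 1"
proof (intro ballI, clarify)
  fix a b assume "(a,b)\<in>E''"
  then obtain x y where "(x,y)\<in>E" "a = f x" "b = f y" using assms(3) by blast
  then show "(\<phi> \<circ> inv f) b \<le> (\<phi> \<circ> inv f) a + 1" using assms(1,2) by (auto simp: inv_f_f)
qed

lemma dist_lower_img:
  assumes "inj f" "\<forall>(u,v)\<in>E. \<phi> v \<le> \<phi> u + (1::nat)" "E'' \<subseteq> map_prod f f ` E"
  shows "enat (\<phi> y - \<phi> x) \<le> dgdist E'' (f x) (f y)"
  using dist_lower[OF pot_img[OF assms], of "f y" "f x"] assms(1) by (simp add: inv_f_f)

datatype vtx = A nat | B nat | P nat | L nat nat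

instance vtx :: countable by countable_datatype

definition Gv :: "nat \<Rightarrow> nat \<Rightarrow> vtx set" where
"Gv m T = A ` {..<m} \<union> B ` {..<m} \<union> P ` {1..T} \<union> (\<lambda>(j,s). L j s) ` ({..<m} \<times> {1..T})"

definition Ge :: "nat \<Rightarrow> nat \<Rightarrow> (vtx \<times> vtx) set" where
"Ge m T = {(A i, B j)| i j. i<m \<and> j<m} \<union> {(A i, P 1)| i. i<m \<and> 1\<le>T}
  \<union> {(P t, P (Suc t))| t. 1\<le>t \<and> t<T} \<union> {(P T, A k)| k. k<m \<and> 1\<le>T}
  \<union> {(A i, A k)| i k. i<m \<and> k<m \<and> T=0} \<union> {(B j, L j 1)| j. j<m \<and> 1\<le>T}
  \<union> {(L j s, L j (Suc s))| j s. j<m \<and> 1\<le>s \<and> s<T}"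

definition psi :: "nat \<Rightarrow> vtx \<Rightarrow> nat" where
"psi T v = (case v of A _ \<Rightarrow> T+1 | P t \<Rightarrow> t | B _ \<Rightarrow> T+2 | L _ s \<Rightarrow> T+2+s)"

definition chi :: "nat \<Rightarrow> vtx \<Rightarrow> nat" where
"chi T v = (case v of A _ \<Rightarrow> 2*T+2 | P _ \<Rightarrow> 2*T+2 | B _ \<Rightarrow> 0 | L _ s \<Rightarrow> s)"

definition phi :: "nat \<Rightarrow> nat \<Rightarrow> nat \<Rightarrow> vtx \<Rightarrow> nat" where
"phi T i j v = (case v of A k \<Rightarrow> if k=i then 0 else T+1 | P t \<Rightarrow> t
   | B l \<Rightarrow> if l=j then T+2 else 1 | L l s \<Rightarrow> (if l=j then T+2 else 1)+s)"

definition far :: "nat \<Rightarrow> nat \<Rightarrow> vtx" where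
"far T j = (if T=0 then B j else L j T)"

lemma psi_pot: "\<forall>(u,v)\<in>Ge m T. psi T v \<le> psi T u + 1"
  by (auto simp: Ge_def psi_def)

lemma chi_pot: "\<forall>(u,v)\<in>Ge m T. chi T v \<le> chi T u + 1"
  by (auto simp: Ge_def chi_def)

lemma phi_pot: "\<forall>(u,v)\<in>Ge m T - {(A i, B j)}. phi T i j v \<le> phi T i j u + 1"
  by (auto simp: Ge_def phi_def split: if_splits)

lemma Ge_sub: "Ge m T \<subseteq> Gv m T \<times> Gv m T"
  by (auto simp: Ge_def Gv_def)

lemma Gv_fin: "finite (Gv m T)"
  by (simp add: Gv_def)

lemma Gv_card: "card (Gv m T) = 2*m + T + m*T"
proof -
  have i1: "inj_on (\<lambda>(j,s). L j s) X" for X by (auto simp: inj_on_def)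
  have "card (Gv m T) = card (A ` {..<m} \<union> B ` {..<m} \<union> P ` {1..T}) + card ((\<lambda>(j,s). L j s) ` ({..<m} \<times> {1..T}))"
    unfolding Gv_def by (rule card_Un_disjoint) auto
  also have "card (A ` {..<m} \<union> B ` {..<m} \<union> P ` {1..T}) = card (A ` {..<m} \<union> B ` {..<m}) + card (P ` {1..T})"
    by (rule card_Un_disjoint) auto
  also have "card (A ` {..<m} \<union> B ` {..<m}) = card (A ` {..<m}) + card (B ` {..<m})"
    by (rule card_Un_disjoint) auto
  finally show ?thesis using i1
    by (simp add: card_image card_cartesian_product inj_on_def)
qed


lemma walkL: "1\<le>s \<Longrightarrow> s\<le>T \<Longrightarrow> j<m \<Longrightarrow> (B j, L j s) \<in> Ge m T ^^ s"
proof (induction s)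
  case 0 then show ?case by simp
next
  case (Suc s)
  show ?case
  proof (cases "s = 0")
    case True then show ?thesis using Suc.prems by (auto simp: Ge_def)
  next
    case False
    then have "(B j, L j s) \<in> Ge m T ^^ s" using Suc by simp
    moreover have "(L j s, L j (Suc s)) \<in> Ge m T" using Suc.prems False by (auto simp: Ge_def)
    ultimately show ?thesis by (rule relpow_Suc_I)
  qed
qed

lemma walkP: "1\<le>t \<Longrightarrow> t\<le>T \<Longrightarrow> i<m \<Longrightarrow> (A i, P t) \<in> Ge m T ^^ t"
proof (induction t)
  case 0 then show ?case by simp
next
  case (Suc t)
  show ?case
  proof (cases "t = 0")
    case True then show ?thesis using Suc.prems by (auto simp: Ge_def)
  next
    case False
    then have "(A i, P t) \<in> Ge m T ^^ t" using Suc by simp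
    moreover have "(P t, P (Suc t)) \<in> Ge m T" using Suc.prems False by (auto simp: Ge_def)
    ultimately show ?thesis by (rule relpow_Suc_I)
  qed
qed

lemma walk: assumes "i<m" "w \<in> Gv m T" shows "\<exists>k\<le>T+1. (A i, w) \<in> Ge m T ^^ k"
proof -
  have e: "(A i, B j) \<in> Ge m T" if "j<m" for j using that assms by (auto simp: Ge_def)
  consider (a) k where "w = A k" "k<m" | (b) j where "w = B j" "j<m"
    | (p) t where "w = P t" "1\<le>t" "t\<le>T" | (l) j s where "w = L j s" "j<m" "1\<le>s" "s\<le>T"
    using assms(2) unfolding Gv_def by auto
  then show ?thesis
  proof cases
    case (a k)
    show ?thesis
    proof (cases "T = 0")
      case True
      then have "(A i, w) \<in> Ge m T" using a assms by (auto simp: Ge_def)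
      then show ?thesis using True by (intro exI[of _ 1]) auto
    next
      case False
      then have "(A i, P T) \<in> Ge m T ^^ T" using walkP assms by simp
      moreover have "(P T, w) \<in> Ge m T" using a False by (auto simp: Ge_def)
      ultimately have "(A i, w) \<in> Ge m T ^^ Suc T" by (rule relpow_Suc_I)
      then show ?thesis by (intro exI[of _ "Suc T"]) auto
    qed
  next
    case (b j)
    then show ?thesis using e[of j] by (intro exI[of _ 1]) auto
  next
    case (p t)
    then show ?thesis using walkP[of t T i m] assms by (intro exI[of _ t]) auto
  next
    case (l j s)
    then have "(A i, w) \<in> Ge m T ^^ Suc s" using e[of j] walkL[of s T j m]
      by (metis relpow_Suc_I2)
    then show ?thesis using l by (intro exI[of _ "Suc s"]) auto
  qed
qed

abbreviation "Vn m T \<equiv> (to_nat :: vtx \<Rightarrow> nat) ` Gv m T"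
abbreviation "En m T \<equiv> map_prod (to_nat :: vtx \<Rightarrow> nat) to_nat ` Ge m T"

lemma ecc_upper: assumes "i<m" shows "outecc (Vn m T) (En m T) (to_nat (A i)) \<le> enat (T+1)"
  unfolding outecc_def
proof (rule SUP_least)
  fix y assume "y \<in> Vn m T"
  then obtain w where w: "w \<in> Gv m T" "y = to_nat w" by blast
  then obtain k where "k \<le> T+1" "(A i, w) \<in> Ge m T ^^ k" using walk assms by blast
  then have "dgdist (En m T) (to_nat (A i)) y \<le> enat k"
    using w by (auto intro: dist_upper img_relpow)
  then show "dgdist (En m T) (to_nat (A i)) y \<le> enat (T+1)" using \<open>k \<le> T+1\<close>
    using order_trans by fastforce
qed

lemma far_in: "j<m \<Longrightarrow> far T j \<in> Gv m T"
  by (auto simp: far_def Gv_def)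

lemma ecc_ge:
  assumes "inj f" "\<forall>(u,v)\<in>E. \<phi> v \<le> \<phi> u + (1::nat)" "E'' \<subseteq> map_prod f f ` E" "y \<in> V"
  shows "enat (\<phi> y - \<phi> x) \<le> outecc (f ` V) E'' (f x)"
proof -
  have "enat (\<phi> y - \<phi> x) \<le> dgdist E'' (f x) (f y)" by (rule dist_lower_img[OF assms(1-3)])
  also have "\<dots> \<le> outecc (f ` V) E'' (f x)" unfolding outecc_def
    using assms(4) by (intro SUP_upper) auto
  finally show ?thesis .
qed

lemma ecc_lower: assumes "1 \<le> m" "v \<in> Gv m T"
  shows "enat (T+1) \<le> outecc (Vn m T) (En m T) (to_nat v)"
proof -
  have inj: "inj (to_nat :: vtx \<Rightarrow> nat)" by simp
  consider (a) k where "v = A k" | (p) t where "v = P t" "t \<le> T" | (b) j where "v = B j"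
    | (l) j s where "v = L j s" "s\<le>T"
    using assms(2) unfolding Gv_def by auto
  then show ?thesis
  proof cases
    case (a k)
    have "enat (psi T (far T 0) - psi T v) \<le> outecc (Vn m T) (En m T) (to_nat v)"
      by (rule ecc_ge[OF inj psi_pot subset_refl far_in]) (use assms in simp)
    then show ?thesis using a by (simp add: psi_def far_def split: if_splits)
  next
    case (p t)
    have "enat (psi T (far T 0) - psi T v) \<le> outecc (Vn m T) (En m T) (to_nat v)"
      by (rule ecc_ge[OF inj psi_pot subset_refl far_in]) (use assms in simp)
    moreover have "T + 1 \<le> psi T (far T 0) - psi T v" using p by (auto simp: psi_def far_def)
    ultimately show ?thesis using order_trans enat_ord_simps(1) by blast
  next
    case (b j)
    have "enat (chi T (A 0) - chi T v) \<le> outecc (Vn m T) (En m T) (to_nat v)"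
      by (rule ecc_ge[OF inj chi_pot subset_refl]) (use assms in \<open>simp add: Gv_def\<close>)
    moreover have "T + 1 \<le> chi T (A 0) - chi T v" using b by (simp add: chi_def)
    ultimately show ?thesis using order_trans enat_ord_simps(1) by blast
  next
    case (l j s)
    have "enat (chi T (A 0) - chi T v) \<le> outecc (Vn m T) (En m T) (to_nat v)"
      by (rule ecc_ge[OF inj chi_pot subset_refl]) (use assms in \<open>simp add: Gv_def\<close>)
    moreover have "T + 1 \<le> chi T (A 0) - chi T v" using l by (simp add: chi_def)
    ultimately show ?thesis using order_trans enat_ord_simps(1) by blast
  qed
qed

lemma rad_G: assumes "1 \<le> m" shows "rad (Vn m T) (En m T) = enat (T+1)"
proof (rule antisym)
  have "A 0 \<in> Gv m T" using assms by (simp add: Gv_def)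
  then have "rad (Vn m T) (En m T) \<le> outecc (Vn m T) (En m T) (to_nat (A 0))"
    unfolding rad_def by (intro INF_lower) auto
  also have "\<dots> \<le> enat (T+1)" using ecc_upper assms by simp
  finally show "rad (Vn m T) (En m T) \<le> enat (T+1)" .
next
  show "enat (T+1) \<le> rad (Vn m T) (En m T)"
    unfolding rad_def using ecc_lower[OF assms] by (auto intro: INF_greatest)
qed


lemma ecc_eq: assumes "i<m" shows "outecc (Vn m T) (En m T) (to_nat (A i)) = enat (T+1)"
  using ecc_upper[OF assms] ecc_lower[of m "A i" T] assms by (simp add: Gv_def antisym)

lemma edge_needed:
  assumes "1 \<le> m" "\<epsilon> > 0" "ecc_spanner (Vn m T) (En m T) E' (2-\<epsilon>)" "i<m" "j<m"
  shows "(to_nat (A i), to_nat (B j)) \<in> E'"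
proof (rule ccontr)
  assume nin: "(to_nat (A i), to_nat (B j)) \<notin> E'"
  have inj: "inj (to_nat :: vtx \<Rightarrow> nat)" by simp
  have sub: "E' \<subseteq> map_prod to_nat to_nat ` (Ge m T - {(A i, B j)})"
  proof
    fix e assume "e \<in> E'"
    then obtain x y where xy: "(x,y) \<in> Ge m T" "e = (to_nat x, to_nat y)"
      using assms(3) unfolding ecc_spanner_def by blast
    then have "(x,y) \<noteq> (A i, B j)" using nin \<open>e\<in>E'\<close> by blast
    then show "e \<in> map_prod to_nat to_nat ` (Ge m T - {(A i, B j)})" using xy by force
  qed
  have "enat (phi T i j (far T j) - phi T i j (A i)) \<le> outecc (Vn m T) E' (to_nat (A i))"
    by (rule ecc_ge[OF inj phi_pot sub far_in[OF assms(5)]])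
  moreover have "phi T i j (far T j) - phi T i j (A i) = 2*T+2"
    by (simp add: phi_def far_def)
  ultimately have h1: "enat (2*T+2) \<le> outecc (Vn m T) E' (to_nat (A i))" by simp
  have "A i \<in> Gv m T" using assms by (simp add: Gv_def)
  then have "ereal_of_enat (outecc (Vn m T) E' (to_nat (A i))) \<le> ereal (2-\<epsilon>) * ereal_of_enat (enat (T+1))"
    using assms(3) ecc_eq[OF assms(4)] unfolding ecc_spanner_def by auto
  moreover have "ereal_of_enat (enat (2*T+2)) \<le> ereal_of_enat (outecc (Vn m T) E' (to_nat (A i)))"
    by (subst ereal_of_enat_le_iff) (rule h1)
  ultimately have "ereal (real (2*T+2)) \<le> ereal ((2-\<epsilon>) * real (T+1))"
    by (metis (no_types, lifting) ereal_of_enat_simps(1) order_trans times_ereal.simps(1))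
  then have "real (2*T+2) \<le> (2-\<epsilon>) * real (T+1)" by simp
  then have "\<epsilon> + \<epsilon> * real T \<le> 0" by (simp add: algebra_simps)
  moreover have "0 \<le> \<epsilon> * real T" using assms(2) by simp
  ultimately show False using assms(2) by linarith
qed

lemma spanner_card:
  assumes "1 \<le> m" "\<epsilon> > 0" "ecc_spanner (Vn m T) (En m T) E' (2-\<epsilon>)"
  shows "m*m \<le> card E'"
proof -
  let ?S = "(\<lambda>(i,j). (to_nat (A i), to_nat (B j))) ` ({..<m}\<times>{..<m})"
  have "?S \<subseteq> E'" using edge_needed[OF assms] by auto
  moreover have "finite E'"
  proof (rule finite_subset)
    show "E' \<subseteq> En m T" using assms(3) unfolding ecc_spanner_def by blast
    show "finite (En m T)" using finite_subset[OF Ge_sub] Gv_fin by blast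
  qed
  ultimately have "card ?S \<le> card E'" by (rule card_mono[rotated])
  moreover have "card ?S = m*m"
    by (subst card_image) (auto simp: inj_on_def card_cartesian_product)
  ultimately show ?thesis by simp
qed


lemma arith1: assumes "1 \<le> R" "R \<le> (n::nat)"
  shows "1 \<le> n div R" "n \<le> 2 * (n div R) * R" "n div R * R \<le> n"
proof -
  show "1 \<le> n div R" using assms by (simp add: Suc_le_eq div_greater_zero_iff)
  have a: "n = n div R * R + n mod R" by simp
  have b: "n mod R < R" using assms by simp
  have c: "R \<le> n div R * R" using \<open>1 \<le> n div R\<close> by simp
  show "n \<le> 2 * (n div R) * R" using a b c by linarith
  show "n div R * R \<le> n" by (simp add: times_div_less_eq_dividend)
qed

lemma arith2: assumes "1 \<le> R" "R \<le> (n::nat)"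
  shows "(1/2) * real n \<le> real (2 * (n div R) + (R-1) + (n div R) * (R-1))"
    "real (2 * (n div R) + (R-1) + (n div R) * (R-1)) \<le> 3 * real n"
    "1/4 * (real n)^2 / (real R)^2 \<le> real ((n div R) * (n div R))"
proof -
  note h = arith1[OF assms]
  have e: "2 * (n div R) + (R-1) + (n div R) * (R-1) = n div R * R + n div R + (R - 1)"
    using assms by (cases R) (auto simp: algebra_simps)
  show "(1/2) * real n \<le> real (2 * (n div R) + (R-1) + (n div R) * (R-1))"
    unfolding e using h(2) by (simp add: of_nat_mult[symmetric] del: of_nat_mult)
  have "n div R \<le> n" by simp
  then show "real (2 * (n div R) + (R-1) + (n div R) * (R-1)) \<le> 3 * real n"
    unfolding e using h(3) assms by linarith
  have r: "real n \<le> 2 * real (n div R) * real R" using h(2) by (metis of_nat_le_iff of_nat_mult of_nat_numeral)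
  have "real n / real R \<le> 2 * real (n div R)" using r assms by (simp add: divide_le_eq)
  then have "(real n / real R)^2 \<le> (2 * real (n div R))^2" by (rule power_mono) simp
  then show "1/4 * (real n)^2 / (real R)^2 \<le> real ((n div R) * (n div R))"
    by (simp add: power_divide power2_eq_square)
qed

theorem theorem1p5:
  shows "\<exists>(V :: nat \<Rightarrow> nat \<Rightarrow> nat set) (E :: nat \<Rightarrow> nat \<Rightarrow> (nat \<times> nat) set) (c1::real) (c2::real).
    0 < c1 \<and> 0 < c2 \<and>
    (\<forall>n R. 1 \<le> R \<and> R \<le> n \<longrightarrow>
        finite (V n R) \<and> E n R \<subseteq> V n R \<times> V n R \<and>
        c1 * real n \<le> real (card (V n R)) \<and> real (card (V n R)) \<le> c2 * real n \<and>
        rad (V n R) (E n R) = enat R) \<and>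
    (\<forall>\<epsilon>::real. \<epsilon> > 0 \<longrightarrow> (\<exists>c::real. c > 0 \<and>
        (\<forall>n R. 1 \<le> R \<and> R \<le> n \<longrightarrow>
          (\<forall>E'. ecc_spanner (V n R) (E n R) E' (2 - \<epsilon>) \<longrightarrow>
              c * (real n)^2 / (real R)^2 \<le> real (card E')))))"
proof (rule exI[of _ "\<lambda>n R. Vn (n div R) (R - 1)"], rule exI[of _ "\<lambda>n R. En (n div R) (R - 1)"],
       rule exI[of _ "1/2"], rule exI[of _ 3], intro conjI allI impI)
  let ?V = "\<lambda>n R. Vn (n div R) (R - 1)"
  let ?E = "\<lambda>n R. En (n div R) (R - 1)"
  show "(0::real) < 1/2" "(0::real) < 3" by auto
  fix n R :: nat assume nR: "1 \<le> R \<and> R \<le> n"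
  note a1 = arith1[of R n] and a2 = arith2[of R n]
  have inj: "inj (to_nat :: vtx \<Rightarrow> nat)" by simp
  have cardV: "card (?V n R) = 2 * (n div R) + (R-1) + (n div R) * (R-1)"
    using Gv_card card_image[OF inj_on_subset[OF inj subset_UNIV]] by metis
  show "finite (?V n R)" using Gv_fin by blast
  show "?E n R \<subseteq> ?V n R \<times> ?V n R" using Ge_sub by blast
  show "1/2 * real n \<le> real (card (?V n R))" using a2 nR cardV by simp
  show "real (card (?V n R)) \<le> 3 * real n" using a2 nR cardV by simp
  show "rad (?V n R) (?E n R) = enat R" using rad_G[of "n div R" "R-1"] a1 nR by simp
next
  fix \<epsilon> :: real assume ep: "\<epsilon> > 0"
  show "\<exists>c::real. c > 0 \<and> (\<forall>n R. 1 \<le> R \<and> R \<le> n \<longrightarrow>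
          (\<forall>E'. ecc_spanner (Vn (n div R) (R - 1)) (En (n div R) (R - 1)) E' (2 - \<epsilon>) \<longrightarrow>
              c * (real n)^2 / (real R)^2 \<le> real (card E')))"
  proof (intro exI[of _ "1/4"] conjI allI impI)
    fix n R :: nat and E' assume nR: "1 \<le> R \<and> R \<le> n"
      and sp: "ecc_spanner (Vn (n div R) (R - 1)) (En (n div R) (R - 1)) E' (2 - \<epsilon>)"
    have "n div R * (n div R) \<le> card E'" using spanner_card[OF _ ep sp] arith1[of R n] nR by simp
    then have "real (n div R * (n div R)) \<le> real (card E')" by linarith
    then show "1/4 * (real n)^2 / (real R)^2 \<le> real (card E')" using arith2(3)[of R n] nR by linarith
  qed simp
qed

end
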